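(* Let $\{\alpha_{i,j,k}\}_{1\le i,j,k\le d}$ be real numbers such that $\alpha_{\pi(i),\pi(j),\pi(k)}=\alpha_{i,j,k}$ for every $(i,j,k)$ and every permutation $\pi$ of $(i,j,k)$. Suppose the system $$\frac{\partial\varphi}{\partial t_i}=\sum_{j,k}\alpha_{i,j,k}t_j\frac{\partial\varphi}{\partial t_k}+t_i\varphi,\qquad i=1,\dots,d,$$ has a solution $\varphi$ of class $C^2$ on a neighborhood $V$ of $\mathbf 0\in\mathbb R^d$ with $\varphi(\mathbf 0)\ne0$. For $k=1,\dots,d$ let $A_k:=(\alpha_{k,r,s})_{1\le r,s\le d}$ and for $i,j$ let $C_{i,j}:=[A_i,A_j]=A_iA_j-A_jA_i$. Then for all $(i,j)\in\{1,\dots,d\}^2$ and all $\mathbf t=(t_1,\dots,t_d)$ in a neighborhood of $\mathbf 0$, $$\big(C_{i,j}\mathbf t\big)\cdot\Big(\big(I-t_1A_1-\cdots-t_dA_d\big)^{-1}\mathbf t\Big)=0,$$ where $I$ is the $d\times d$ identity matrix and $\cdot$ is the standard inner product on $\mathbb R^d$. *)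

theory Defs
  imports "HOL-Analysis.Analysis"
begin

definition coefmat :: "('n::finite \<Rightarrow> 'n \<Rightarrow> 'n \<Rightarrow> real) \<Rightarrow> 'n \<Rightarrow> real^'n^'n" where
  "coefmat \<alpha> k = (\<chi> r s. \<alpha> k r s)"

definition commut :: "('n::finite \<Rightarrow> 'n \<Rightarrow> 'n \<Rightarrow> real) \<Rightarrow> 'n \<Rightarrow> 'n \<Rightarrow> real^'n^'n" where
  "commut \<alpha> i j = coefmat \<alpha> i ** coefmat \<alpha> j - coefmat \<alpha> j ** coefmat \<alpha> i"

end

theory Submission
  imports Defs
begin


lemma line_deriv:
  fixes f :: "'a::real_normed_vector \<Rightarrow> real"
  assumes "(f has_derivative blinfun_apply (Df (c + s *\<^sub>R a))) (at (c + s *\<^sub>R a))"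
  shows "((\<lambda>s. f (c + s *\<^sub>R a)) has_real_derivative Df (c + s *\<^sub>R a) a) (at s)"
proof -
  have "((\<lambda>s. c + s *\<^sub>R a) has_derivative (\<lambda>t. t *\<^sub>R a)) (at s)"
    by (auto intro!: derivative_eq_intros)
  from has_derivative_compose[OF this assms]
  show ?thesis
    by (rule has_derivative_imp_has_field_derivative) (simp add: blinfun.scaleR_right)
qed

lemma line_deriv2:
  fixes Df :: "'a::real_normed_vector \<Rightarrow> 'a \<Rightarrow>\<^sub>L real"
  assumes "(Df has_derivative blinfun_apply (D2f (c + s *\<^sub>R a))) (at (c + s *\<^sub>R a))"
  shows "((\<lambda>s. Df (c + s *\<^sub>R a) b) has_real_derivative D2f (c + s *\<^sub>R a) a b) (at s)"
proof -
  have "((\<lambda>s. c + s *\<^sub>R a) has_derivative (\<lambda>t. t *\<^sub>R a)) (at s)"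
    by (auto intro!: derivative_eq_intros)
  from has_derivative_compose[OF this assms]
  have "((\<lambda>s. Df (c + s *\<^sub>R a)) has_derivative (\<lambda>t. D2f (c + s *\<^sub>R a) (t *\<^sub>R a))) (at s)"
    by (simp add: o_def)
  then have "((\<lambda>s. Df (c + s *\<^sub>R a) b) has_derivative (\<lambda>t. D2f (c + s *\<^sub>R a) (t *\<^sub>R a) b)) (at s)"
    by (auto intro!: derivative_eq_intros)
  then show ?thesis
    by (rule has_derivative_imp_has_field_derivative) (simp add: blinfun.scaleR_right blinfun.scaleR_left)
qed

lemma mixed_mvt:
  fixes f :: "'a::real_normed_vector \<Rightarrow> real"
  assumes h: "h > 0"
  and inS: "\<And>s r. 0 \<le> s \<Longrightarrow> s \<le> h \<Longrightarrow> 0 \<le> r \<Longrightarrow> r \<le> h \<Longrightarrow> x + s *\<^sub>R a + r *\<^sub>R b \<in> S"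
  and D1: "\<And>y. y \<in> S \<Longrightarrow> (f has_derivative blinfun_apply (Df y)) (at y)"
  and D2: "\<And>y. y \<in> S \<Longrightarrow> (Df has_derivative blinfun_apply (D2f y)) (at y)"
  shows "\<exists>s r. 0 \<le> s \<and> s \<le> h \<and> 0 \<le> r \<and> r \<le> h \<and>
     f (x + h *\<^sub>R a + h *\<^sub>R b) - f (x + h *\<^sub>R a) - f (x + h *\<^sub>R b) + f x = h * h * D2f (x + s *\<^sub>R a + r *\<^sub>R b) b a"
proof -
  define g where "g s = f ((x + h *\<^sub>R b) + s *\<^sub>R a) - f (x + s *\<^sub>R a)" for s
  have "\<exists>z. 0 < z \<and> z < h \<and> g h - g 0 = (h - 0) * (Df ((x + h *\<^sub>R b) + z *\<^sub>R a) a - Df (x + z *\<^sub>R a) a)"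
  proof (rule MVT2[OF h])
    fix s assume s: "0 \<le> s" "s \<le> h"
    have m1: "x + h *\<^sub>R b + s *\<^sub>R a \<in> S" using inS[OF s h[THEN less_imp_le] order_refl]
      by (simp add: algebra_simps)
    have m2: "x + s *\<^sub>R a \<in> S" using inS[OF s order_refl h[THEN less_imp_le]] by simp
    show "(g has_real_derivative (Df ((x + h *\<^sub>R b) + s *\<^sub>R a) a - Df (x + s *\<^sub>R a) a)) (at s)"
      unfolding g_def
      by (intro DERIV_diff line_deriv D1 m1 m2)
  qed
  then obtain z where z: "0 < z" "z < h" "g h - g 0 = h * (Df ((x + h *\<^sub>R b) + z *\<^sub>R a) a - Df (x + z *\<^sub>R a) a)"
    by auto
  define k where "k r = Df ((x + z *\<^sub>R a) + r *\<^sub>R b) a" for r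
  have "\<exists>w. 0 < w \<and> w < h \<and> k h - k 0 = (h - 0) * D2f ((x + z *\<^sub>R a) + w *\<^sub>R b) b a"
  proof (rule MVT2[OF h])
    fix r assume r: "0 \<le> r" "r \<le> h"
    have m1: "x + z *\<^sub>R a + r *\<^sub>R b \<in> S" using inS[of z r] z r by simp
    show "(k has_real_derivative D2f ((x + z *\<^sub>R a) + r *\<^sub>R b) b a) (at r)"
      unfolding k_def by (intro line_deriv2 D2 m1)
  qed
  then obtain w where w: "0 < w" "w < h" "k h - k 0 = h * D2f ((x + z *\<^sub>R a) + w *\<^sub>R b) b a"
    by auto
  have e1: "f (x + h *\<^sub>R a + h *\<^sub>R b) - f (x + h *\<^sub>R a) - f (x + h *\<^sub>R b) + f x = g h - g 0"
    unfolding g_def by (simp add: algebra_simps)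
  have e2: "Df ((x + h *\<^sub>R b) + z *\<^sub>R a) a - Df (x + z *\<^sub>R a) a = k h - k 0"
    unfolding k_def by (simp add: algebra_simps)
  show ?thesis
    using z w e1 e2 by (intro exI[of _ z] exI[of _ w]) auto
qed

lemma blinfun2_bound:
  fixes F :: "'a::real_normed_vector \<Rightarrow>\<^sub>L ('b::real_normed_vector \<Rightarrow>\<^sub>L real)"
  shows "\<bar>F a b\<bar> \<le> norm F * norm a * norm b"
proof -
  have "\<bar>F a b\<bar> \<le> norm (F a) * norm b" using norm_blinfun[of "F a" b] by simp
  also have "\<dots> \<le> norm F * norm a * norm b"
    by (intro mult_right_mono norm_blinfun) auto
  finally show ?thesis .
qed

lemma schwarz:
  fixes f :: "'a::real_normed_vector \<Rightarrow> real"
  assumes S: "open S" "x \<in> S"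
  and D1: "\<And>y. y \<in> S \<Longrightarrow> (f has_derivative blinfun_apply (Df y)) (at y)"
  and D2: "\<And>y. y \<in> S \<Longrightarrow> (Df has_derivative blinfun_apply (D2f y)) (at y)"
  and C: "continuous_on S D2f"
  shows "D2f x u v = D2f x v u"
proof (rule ccontr)
  assume ne: "D2f x u v \<noteq> D2f x v u"
  define c where "c = \<bar>D2f x u v - D2f x v u\<bar>"
  have c: "c > 0" using ne unfolding c_def by simp
  define K where "K = (norm u + 1) * (norm v + 1)"
  have K: "K > 0" unfolding K_def by (intro mult_pos_pos) (auto intro: add_nonneg_pos)
  have "isCont D2f x" using C S continuous_on_eq_continuous_at by blast
  then obtain d1 where d1: "d1 > 0" "\<And>y. dist y x < d1 \<Longrightarrow> dist (D2f y) (D2f x) < c / (3 * K)"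
    unfolding continuous_at_eps_delta using c K by (metis divide_pos_pos mult_pos_pos zero_less_numeral)
  obtain d2 where d2: "d2 > 0" "ball x d2 \<subseteq> S" using S open_contains_ball by blast
  define d where "d = min d1 d2"
  have d: "d > 0" using d1 d2 unfolding d_def by simp
  have bnd: "\<bar>D2f y a b - D2f x a b\<bar> \<le> c / 3"
    if y: "dist y x < d" and ab: "norm a * norm b \<le> K" for y a b
  proof -
    have "\<bar>D2f y a b - D2f x a b\<bar> = \<bar>(D2f y - D2f x) a b\<bar>" by (simp add: blinfun.diff_left)
    also have "\<dots> \<le> norm (D2f y - D2f x) * norm a * norm b" by (rule blinfun2_bound)
    also have "\<dots> = norm (D2f y - D2f x) * (norm a * norm b)" by simp
    also have "\<dots> \<le> c / (3 * K) * K"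
    proof (rule mult_mono)
      show "norm (D2f y - D2f x) \<le> c / (3 * K)"
        using d1(2)[of y] y unfolding d_def dist_norm by simp
    qed (use ab K c in auto)
    also have "\<dots> = c / 3" using K by simp
    finally show ?thesis .
  qed
  have Ku: "norm u * norm v \<le> K" "norm v * norm u \<le> K" unfolding K_def by (auto simp: algebra_simps)
  define h where "h = d / (4 * (norm u + norm v + 1))"
  have h: "h > 0" unfolding h_def using d by (auto intro!: divide_pos_pos add_nonneg_pos)
  have inb: "dist (x + s *\<^sub>R a + r *\<^sub>R b) x < d"
    if "0 \<le> s" "s \<le> h" "0 \<le> r" "r \<le> h" "a \<in> {u, v}" "b \<in> {u, v}" for s r a b
  proof -
    have "dist (x + s *\<^sub>R a + r *\<^sub>R b) x = norm (s *\<^sub>R a + r *\<^sub>R b)" by (simp add: dist_norm)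
    also have "\<dots> \<le> s * norm a + r * norm b"
      using that by (metis abs_of_nonneg norm_scaleR norm_triangle_ineq)
    also have "\<dots> \<le> h * (norm u + norm v) + h * (norm u + norm v)"
    proof (rule add_mono)
      show "s * norm a \<le> h * (norm u + norm v)"
        using that by (intro mult_mono) auto
      show "r * norm b \<le> h * (norm u + norm v)"
        using that by (intro mult_mono) auto
    qed
    also have "\<dots> < d"
    proof -
      have "h * (norm u + norm v) + h * (norm u + norm v) < h * (4 * (norm u + norm v + 1))"
        using h by (simp add: algebra_simps add_pos_nonneg)
      also have "\<dots> = d" unfolding h_def
        using norm_ge_zero[of u] norm_ge_zero[of v] by (simp; linarith)
      finally show ?thesis .
    qed
    finally show ?thesis .
  qed
  have inS: "x + s *\<^sub>R a + r *\<^sub>R b \<in> S"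
    if "0 \<le> s" "s \<le> h" "0 \<le> r" "r \<le> h" "a \<in> {u, v}" "b \<in> {u, v}" for s r a b
    using inb[OF that] d2(2) unfolding d_def by (auto simp: dist_commute)
  obtain s1 r1 where sr1: "0 \<le> s1" "s1 \<le> h" "0 \<le> r1" "r1 \<le> h"
    "f (x + h *\<^sub>R u + h *\<^sub>R v) - f (x + h *\<^sub>R u) - f (x + h *\<^sub>R v) + f x = h * h * D2f (x + s1 *\<^sub>R u + r1 *\<^sub>R v) v u"
    using mixed_mvt[OF h, of x u v S f Df D2f] inS D1 D2 by blast
  obtain s2 r2 where sr2: "0 \<le> s2" "s2 \<le> h" "0 \<le> r2" "r2 \<le> h"
    "f (x + h *\<^sub>R v + h *\<^sub>R u) - f (x + h *\<^sub>R v) - f (x + h *\<^sub>R u) + f x = h * h * D2f (x + s2 *\<^sub>R v + r2 *\<^sub>R u) u v"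
    using mixed_mvt[OF h, of x v u S f Df D2f] inS D1 D2 by blast
  have "h * h * D2f (x + s1 *\<^sub>R u + r1 *\<^sub>R v) v u = h * h * D2f (x + s2 *\<^sub>R v + r2 *\<^sub>R u) u v"
    using sr1(5) sr2(5) by (simp add: algebra_simps)
  then have eq: "D2f (x + s1 *\<^sub>R u + r1 *\<^sub>R v) v u = D2f (x + s2 *\<^sub>R v + r2 *\<^sub>R u) u v"
    using h by simp
  have b1: "\<bar>D2f (x + s1 *\<^sub>R u + r1 *\<^sub>R v) v u - D2f x v u\<bar> \<le> c / 3"
    by (rule bnd[OF inb[OF sr1(1-4)]]) (use Ku in auto)
  have b2: "\<bar>D2f (x + s2 *\<^sub>R v + r2 *\<^sub>R u) u v - D2f x u v\<bar> \<le> c / 3"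
    by (rule bnd[OF inb[OF sr2(1-4)]]) (use Ku in auto)
  have "c \<le> 2 * c / 3" using b1 b2 eq unfolding c_def by linarith
  then show False using c by simp
qed


definition Bm :: "('n::finite \<Rightarrow> 'n \<Rightarrow> 'n \<Rightarrow> real) \<Rightarrow> real^'n \<Rightarrow> real^'n^'n" where
  "Bm \<alpha> w = (\<Sum>s\<in>UNIV. w $ s *\<^sub>R coefmat \<alpha> s)"

lemma Bm_ent: "Bm \<alpha> w $ i $ j = (\<Sum>s\<in>UNIV. w $ s * \<alpha> s i j)"
  by (simp add: Bm_def sum_component coefmat_def)

lemma prod_term:
  fixes \<alpha> :: "'n::finite \<Rightarrow> 'n \<Rightarrow> 'n \<Rightarrow> real"
  assumes s1: "\<And>a b c. \<alpha> a b c = \<alpha> b a c" and s2: "\<And>a b c. \<alpha> a b c = \<alpha> a c b"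
  shows "(Bm \<alpha> w ** Bm \<alpha> t) $ p $ q =
    (\<Sum>r\<in>UNIV. w $ r * (\<Sum>u\<in>UNIV. (\<Sum>m\<in>UNIV. \<alpha> p r m * \<alpha> q m u) * t $ u))"
proof -
  have "(Bm \<alpha> w ** Bm \<alpha> t) $ p $ q = (\<Sum>m\<in>UNIV. (\<Sum>s\<in>UNIV. w $ s * \<alpha> s p m) * (\<Sum>j\<in>UNIV. t $ j * \<alpha> j m q))"
    by (simp add: matrix_matrix_mult_def Bm_ent)
  also have "\<dots> = (\<Sum>m\<in>UNIV. \<Sum>s\<in>UNIV. \<Sum>j\<in>UNIV. w $ s * \<alpha> p s m * (t $ j * \<alpha> q m j))"
    unfolding sum_product
  proof (intro sum.cong refl)
    fix m s j
    show "w $ s * \<alpha> s p m * (t $ j * \<alpha> j m q) = w $ s * \<alpha> p s m * (t $ j * \<alpha> q m j)"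
    proof -
      have "\<alpha> j m q = \<alpha> q m j" using s1[of j m q] s2[of m j q] s1[of m q j] by simp
      then show ?thesis using s1[of s p m] by simp
    qed
  qed
  also have "\<dots> = (\<Sum>s\<in>UNIV. \<Sum>m\<in>UNIV. \<Sum>j\<in>UNIV. w $ s * \<alpha> p s m * (t $ j * \<alpha> q m j))"
    by (rule sum.swap)
  also have "\<dots> = (\<Sum>s\<in>UNIV. \<Sum>j\<in>UNIV. \<Sum>m\<in>UNIV. w $ s * \<alpha> p s m * (t $ j * \<alpha> q m j))"
    by (rule sum.cong[OF refl], rule sum.swap)
  also have "\<dots> = (\<Sum>r\<in>UNIV. w $ r * (\<Sum>u\<in>UNIV. (\<Sum>m\<in>UNIV. \<alpha> p r m * \<alpha> q m u) * t $ u))"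
    unfolding sum_distrib_left sum_distrib_right
    by (intro sum.cong refl) (simp add: algebra_simps)
  finally show ?thesis .
qed

lemma comm_ident:
  fixes \<alpha> :: "'n::finite \<Rightarrow> 'n \<Rightarrow> 'n \<Rightarrow> real"
  assumes s1: "\<And>a b c. \<alpha> a b c = \<alpha> b a c" and s2: "\<And>a b c. \<alpha> a b c = \<alpha> a c b"
  shows "(commut \<alpha> p q *v t) \<bullet> w = (Bm \<alpha> w ** Bm \<alpha> t - Bm \<alpha> t ** Bm \<alpha> w) $ p $ q"
proof -
  have L: "(commut \<alpha> p q *v t) \<bullet> w = (\<Sum>r\<in>UNIV. w $ r * (\<Sum>u\<in>UNIV. (\<Sum>m\<in>UNIV. \<alpha> p r m * \<alpha> q m u) * t $ u))
     - (\<Sum>r\<in>UNIV. w $ r * (\<Sum>u\<in>UNIV. (\<Sum>m\<in>UNIV. \<alpha> q r m * \<alpha> p m u) * t $ u))"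
    by (simp add: inner_vec_def commut_def matrix_vector_mult_def matrix_matrix_mult_def coefmat_def
        sum_subtractf left_diff_distrib right_diff_distrib mult.commute)
  have "(Bm \<alpha> t ** Bm \<alpha> w) $ p $ q = (\<Sum>r\<in>UNIV. t $ r * (\<Sum>u\<in>UNIV. (\<Sum>m\<in>UNIV. \<alpha> p r m * \<alpha> q m u) * w $ u))"
    by (rule prod_term[OF s1 s2])
  also have "\<dots> = (\<Sum>r\<in>UNIV. \<Sum>u\<in>UNIV. t $ r * ((\<Sum>m\<in>UNIV. \<alpha> p r m * \<alpha> q m u) * w $ u))"
    by (simp add: sum_distrib_left)
  also have "\<dots> = (\<Sum>u\<in>UNIV. \<Sum>r\<in>UNIV. t $ r * ((\<Sum>m\<in>UNIV. \<alpha> p r m * \<alpha> q m u) * w $ u))"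
    by (rule sum.swap)
  also have "\<dots> = (\<Sum>u\<in>UNIV. \<Sum>r\<in>UNIV. w $ u * ((\<Sum>m\<in>UNIV. \<alpha> q u m * \<alpha> p m r) * t $ r))"
  proof (intro sum.cong refl)
    fix u r
    have "(\<Sum>m\<in>UNIV. \<alpha> p r m * \<alpha> q m u) = (\<Sum>m\<in>UNIV. \<alpha> q u m * \<alpha> p m r)"
      by (intro sum.cong refl) (metis s2 mult.commute)
    then show "t $ r * ((\<Sum>m\<in>UNIV. \<alpha> p r m * \<alpha> q m u) * w $ u) = w $ u * ((\<Sum>m\<in>UNIV. \<alpha> q u m * \<alpha> p m r) * t $ r)"
      by simp
  qed
  also have "\<dots> = (\<Sum>r\<in>UNIV. w $ r * (\<Sum>u\<in>UNIV. (\<Sum>m\<in>UNIV. \<alpha> q r m * \<alpha> p m u) * t $ u))"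
    by (simp add: sum_distrib_left)
  finally have R2: "(Bm \<alpha> t ** Bm \<alpha> w) $ p $ q = \<dots>" .
  show ?thesis using L R2 prod_term[OF s1 s2, where w=w and t=t and p=p and q=q] by simp
qed

definition outer :: "real^'n \<Rightarrow> real^'n \<Rightarrow> real^'n^'n" where
  "outer x y = (\<chi> i j. x $ i * y $ j)"

lemma mm_add_r: "((A::real^'n^'m) + B) ** C = A ** C + B ** C"
  by (simp add: vec_eq_iff matrix_matrix_mult_def sum.distrib algebra_simps)
lemma mm_diff_r: "((A::real^'n^'m) - B) ** C = A ** C - B ** C"
  by (simp add: vec_eq_iff matrix_matrix_mult_def sum_subtractf algebra_simps)
lemma mm_diff_l: "(A::real^'n^'m) ** (B - C) = A ** B - A ** C"
  by (simp add: vec_eq_iff matrix_matrix_mult_def sum_subtractf algebra_simps)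

lemma outer_mul: "outer ((L::real^'n^'n) *v x) y = L ** outer x y"
  by (simp add: vec_eq_iff outer_def matrix_matrix_mult_def matrix_vector_mult_def sum_distrib_right mult.assoc)
lemma outer_scale: "outer x (c *\<^sub>R y) = c *\<^sub>R outer x y"
  by (simp add: vec_eq_iff outer_def)
lemma outer_transpose: "transpose (outer x x) = outer x x"
  by (simp add: vec_eq_iff outer_def transpose_def)

lemma transpose_add: "transpose ((A::real^'n^'m) + B) = transpose A + transpose B"
  by (simp add: transpose_def vec_eq_iff)

lemma alg:
  fixes L Bg K N :: "real^'n^'n"
  assumes LN: "L ** N = mat 1" and NL: "N ** L = mat 1" and symL: "transpose L = L"
    and symB: "transpose Bg = Bg" and symK: "transpose K = K"
    and vec: "L *v g = c *\<^sub>R t" and Keq: "L ** K = Bg + c *\<^sub>R mat 1 + outer t g"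
  shows "Bg ** L = L ** Bg" and "g = c *\<^sub>R (N *v t)"
proof -
  define w where "w = N *v t"
  have symN: "transpose N = N"
  proof -
    have "transpose N = transpose N ** (L ** N)" using LN by simp
    also have "\<dots> = transpose (L ** N) ** N" by (simp add: matrix_mul_assoc matrix_transpose_mul symL)
    also have "\<dots> = N" using LN by simp
    finally show ?thesis .
  qed
  have tw: "t = L *v w" unfolding w_def by (simp add: matrix_vector_mul_assoc LN)
  show gw: "g = c *\<^sub>R (N *v t)"
  proof -
    have "g = N *v (L *v g)" by (simp add: matrix_vector_mul_assoc NL)
    then show ?thesis using vec by (simp add: matrix_vector_mult_scaleR)
  qed
  have "K = N ** (L ** K)" by (simp add: matrix_mul_assoc NL)
  also have "\<dots> = N ** Bg + c *\<^sub>R N + N ** outer t g"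
    unfolding Keq by (simp add: matrix_add_ldistrib matrix_scalar_ac)
  also have "N ** outer t g = c *\<^sub>R outer w w"
  proof -
    have "outer t g = outer (L *v w) (c *\<^sub>R w)"
      by (subst tw[symmetric]) (simp add: gw w_def)
    also have "\<dots> = c *\<^sub>R (L ** outer w w)" by (simp add: outer_scale outer_mul)
    finally show ?thesis by (simp add: matrix_scalar_ac matrix_mul_assoc NL scalar_matrix_assoc[symmetric])
  qed
  finally have K: "K = N ** Bg + c *\<^sub>R N + c *\<^sub>R outer w w" .
  have "K = transpose K" using symK by simp
  also have "\<dots> = Bg ** N + c *\<^sub>R N + c *\<^sub>R outer w w"
    unfolding K by (simp add: matrix_transpose_mul symN symB transpose_scalar outer_transpose transpose_add)
  finally have NB: "N ** Bg = Bg ** N" using K by simp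
  have "Bg ** L = L ** (N ** Bg) ** L" by (simp add: matrix_mul_assoc LN)
  also have "\<dots> = L ** (Bg ** N) ** L" by (simp add: NB)
  also have "\<dots> = L ** Bg" by (simp add: matrix_mul_assoc[symmetric] NL)
  finally show "Bg ** L = L ** Bg" .
qed




lemma pde_deriv:
  fixes \<alpha> :: "'n::finite \<Rightarrow> 'n \<Rightarrow> 'n \<Rightarrow> real"
    and \<phi> :: "real^'n \<Rightarrow> real"
    and D\<phi> :: "real^'n \<Rightarrow> ((real^'n) \<Rightarrow>\<^sub>L real)"
    and D2\<phi> :: "real^'n \<Rightarrow> ((real^'n) \<Rightarrow>\<^sub>L ((real^'n) \<Rightarrow>\<^sub>L real))"
  assumes V: "open V" "t \<in> V"
    and D1: "\<And>x. x \<in> V \<Longrightarrow> (\<phi> has_derivative blinfun_apply (D\<phi> x)) (at x)"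
    and D2: "\<And>x. x \<in> V \<Longrightarrow> (D\<phi> has_derivative blinfun_apply (D2\<phi> x)) (at x)"
    and pde: "\<And>x. x \<in> V \<Longrightarrow>
      D\<phi> x (axis i 1) = (\<Sum>j\<in>UNIV. \<Sum>k\<in>UNIV. \<alpha> i j k * x $ j * D\<phi> x (axis k 1)) + x $ i * \<phi> x"
  shows "D2\<phi> t h (axis i 1) = (\<Sum>j\<in>UNIV. \<Sum>k\<in>UNIV. \<alpha> i j k * (h $ j * D\<phi> t (axis k 1) + t $ j * D2\<phi> t h (axis k 1)))
      + (h $ i * \<phi> t + t $ i * D\<phi> t h)"
proof -
  have d1: "((\<lambda>y. D\<phi> y (axis i 1)) has_derivative (\<lambda>h. D2\<phi> t h (axis i 1))) (at t)"
    using D2[OF V(2)] by (auto intro!: derivative_eq_intros)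
  have d1': "((\<lambda>y. (\<Sum>j\<in>UNIV. \<Sum>k\<in>UNIV. \<alpha> i j k * y $ j * D\<phi> y (axis k 1)) + y $ i * \<phi> y) has_derivative (\<lambda>h. D2\<phi> t h (axis i 1))) (at t)"
    by (rule has_derivative_transform_within_open[OF d1 V]) (rule pde)
  have d2: "((\<lambda>y. (\<Sum>j\<in>UNIV. \<Sum>k\<in>UNIV. \<alpha> i j k * y $ j * D\<phi> y (axis k 1)) + y $ i * \<phi> y) has_derivative
     (\<lambda>h. (\<Sum>j\<in>UNIV. \<Sum>k\<in>UNIV. \<alpha> i j k * (h $ j * D\<phi> t (axis k 1) + t $ j * D2\<phi> t h (axis k 1)))
      + (h $ i * \<phi> t + t $ i * D\<phi> t h))) (at t)"
    using D1[OF V(2)] D2[OF V(2)]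
    by (auto intro!: derivative_eq_intros bounded_linear.has_derivative[OF bounded_linear_vec_nth] simp: algebra_simps)
  from has_derivative_unique[OF d1' d2] show ?thesis by meson
qed

lemma Bm_scale: "Bm \<alpha> (c *\<^sub>R w) = c *\<^sub>R Bm \<alpha> w"
  by (simp add: Bm_def scaleR_sum_right)

lemma Bm_zero: "Bm \<alpha> 0 = 0"
  by (simp add: Bm_def)

lemma L_ent: "(mat 1 - Bm \<alpha> t) $ i $ j = (if i = j then 1 else 0) - (\<Sum>s\<in>UNIV. t $ s * \<alpha> s i j)"
  by (simp add: Bm_ent mat_def)

lemma det_cont: "continuous_on UNIV (\<lambda>t. det (mat 1 - Bm \<alpha> t))"
  unfolding det_def L_ent by (intro continuous_intros)

lemma inv_props:
  fixes L :: "real^'n^'n"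
  assumes "det L \<noteq> 0"
  shows "L ** matrix_inv L = mat 1 \<and> matrix_inv L ** L = mat 1"
proof -
  have "invertible L" using assms invertible_det_nz by blast
  then show ?thesis unfolding invertible_def matrix_inv_def by (rule someI_ex)
qed

lemma symmat: "(\<And>i j. (A::real^'n^'n) $ i $ j = A $ j $ i) \<Longrightarrow> transpose A = A"
  by (simp add: transpose_def vec_eq_iff)

theorem mainTheorem7:
  fixes \<alpha> :: "'n::finite \<Rightarrow> 'n \<Rightarrow> 'n \<Rightarrow> real"
    and \<phi> :: "real^'n \<Rightarrow> real"
    and D\<phi> :: "real^'n \<Rightarrow> ((real^'n) \<Rightarrow>\<^sub>L real)"
    and D2\<phi> :: "real^'n \<Rightarrow> ((real^'n) \<Rightarrow>\<^sub>L ((real^'n) \<Rightarrow>\<^sub>L real))"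
    and V :: "(real^'n) set"
  assumes sym: "\<And>i j k. \<alpha> i j k = \<alpha> i k j \<and> \<alpha> i j k = \<alpha> j i k \<and> \<alpha> i j k = \<alpha> j k i
                         \<and> \<alpha> i j k = \<alpha> k i j \<and> \<alpha> i j k = \<alpha> k j i"
    and V: "open V" "0 \<in> V"
    and D1: "\<And>x. x \<in> V \<Longrightarrow> (\<phi> has_derivative blinfun_apply (D\<phi> x)) (at x)"
    and D2: "\<And>x. x \<in> V \<Longrightarrow> (D\<phi> has_derivative blinfun_apply (D2\<phi> x)) (at x)"
    and C2: "continuous_on V D2\<phi>"
    and pde: "\<And>x i. x \<in> V \<Longrightarrow>
      D\<phi> x (axis i 1) = (\<Sum>j\<in>UNIV. \<Sum>k\<in>UNIV. \<alpha> i j k * x $ j * D\<phi> x (axis k 1)) + x $ i * \<phi> x"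
    and nz: "\<phi> 0 \<noteq> 0"
  shows "\<exists>U. open U \<and> 0 \<in> U \<and>
    (\<forall>t\<in>U. \<forall>i j. (commut \<alpha> i j *v t) \<bullet>
        (matrix_inv (mat 1 - (\<Sum>k\<in>UNIV. t $ k *\<^sub>R coefmat \<alpha> k)) *v t) = 0)"
proof -
  have s1: "\<And>a b c. \<alpha> a b c = \<alpha> b a c" and s2: "\<And>a b c. \<alpha> a b c = \<alpha> a c b"
    using sym by blast+
  define U where "U = (V \<inter> \<phi> -` (- {0})) \<inter> (UNIV \<inter> (\<lambda>t. det (mat 1 - Bm \<alpha> t)) -` (- {0}))"
  have contphi: "continuous_on V \<phi>"
    using D1 by (meson continuous_at_imp_continuous_on has_derivative_continuous)
  have "open U" unfolding U_def
    by (intro open_Int continuous_open_preimage contphi det_cont V open_Compl) auto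
  moreover have "0 \<in> U" unfolding U_def using V nz by (simp add: Bm_zero)
  moreover have "(commut \<alpha> p q *v t) \<bullet> (matrix_inv (mat 1 - Bm \<alpha> t) *v t) = 0"
    if tU: "t \<in> U" for t p q
  proof -
    have tV: "t \<in> V" and phit: "\<phi> t \<noteq> 0" and dett: "det (mat 1 - Bm \<alpha> t) \<noteq> 0"
      using tU unfolding U_def by auto
    define L where "L = mat 1 - Bm \<alpha> t"
    define N where "N = matrix_inv L"
    have LN: "L ** N = mat 1" and NL: "N ** L = mat 1"
      using inv_props[OF dett] unfolding L_def N_def by auto
    have symL: "transpose L = L"
      proof (rule symmat)
      fix i j
      have "(\<Sum>s\<in>UNIV. t $ s * \<alpha> s i j) = (\<Sum>s\<in>UNIV. t $ s * \<alpha> s j i)" using s2[of _ i j] by simp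
      then show "L $ i $ j = L $ j $ i" unfolding L_def L_ent by auto
    qed
    define g where "g = (\<chi> k. D\<phi> t (axis k 1))"
    define K where "K = (\<chi> i l. D2\<phi> t (axis l 1) (axis i 1))"
    have symB: "transpose (Bm \<alpha> g) = Bm \<alpha> g"
      by (rule symmat) (simp add: Bm_ent s2)
    have symK: "transpose K = K"
      unfolding K_def by (rule symmat) (simp add: schwarz[OF V(1) tV D1 D2 C2])
    have vec: "L *v g = \<phi> t *\<^sub>R t"
    proof -
      have "(L *v g) $ i = (\<phi> t *\<^sub>R t) $ i" for i
      proof -
        have e1: "(L *v g) $ i = g $ i - (Bm \<alpha> t *v g) $ i"
          by (simp add: L_def matrix_vector_mult_diff_rdistrib)
        have "(Bm \<alpha> t *v g) $ i = (\<Sum>k\<in>UNIV. (\<Sum>s\<in>UNIV. t $ s * \<alpha> s i k) * g $ k)"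
          by (simp add: matrix_vector_mult_def Bm_ent)
        also have "\<dots> = (\<Sum>k\<in>UNIV. \<Sum>s\<in>UNIV. t $ s * \<alpha> s i k * g $ k)"
          by (simp add: sum_distrib_right)
        also have "\<dots> = (\<Sum>s\<in>UNIV. \<Sum>k\<in>UNIV. t $ s * \<alpha> s i k * g $ k)"
          by (rule sum.swap)
        also have "\<dots> = (\<Sum>j\<in>UNIV. \<Sum>k\<in>UNIV. \<alpha> i j k * t $ j * D\<phi> t (axis k 1))"
          by (intro sum.cong refl) (simp add: g_def s1[of _ i])
        finally have e2: "(Bm \<alpha> t *v g) $ i = (\<Sum>j\<in>UNIV. \<Sum>k\<in>UNIV. \<alpha> i j k * t $ j * D\<phi> t (axis k 1))" .
        show ?thesis using e1 e2 pde[OF tV, of i] by (simp add: g_def)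
      qed
      then show ?thesis by (simp add: vec_eq_iff)
    qed
    have Keq: "L ** K = Bm \<alpha> g + \<phi> t *\<^sub>R mat 1 + outer t g"
    proof -
      have "(L ** K) $ i $ l = (Bm \<alpha> g + \<phi> t *\<^sub>R mat 1 + outer t g) $ i $ l" for i l
      proof -
        define A1 where "A1 = (\<Sum>k\<in>UNIV. \<alpha> i l k * g $ k)"
        define A2 where "A2 = (\<Sum>j\<in>UNIV. \<Sum>k\<in>UNIV. \<alpha> i j k * t $ j * K $ k $ l)"
        have ax: "axis l (1::real) $ j = (if j = l then 1 else 0)" for j
          by (simp add: axis_def)
        have pd: "D2\<phi> t (axis l 1) (axis i 1) = (\<Sum>j\<in>UNIV. \<Sum>k\<in>UNIV. \<alpha> i j k * (axis l 1 $ j * D\<phi> t (axis k 1) + t $ j * D2\<phi> t (axis l 1) (axis k 1)))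
          + (axis l 1 $ i * \<phi> t + t $ i * D\<phi> t (axis l 1))"
          by (rule pde_deriv[OF V(1) tV D1 D2 pde])
        have "(\<Sum>j\<in>UNIV. \<Sum>k\<in>UNIV. \<alpha> i j k * (axis l 1 $ j * D\<phi> t (axis k 1) + t $ j * D2\<phi> t (axis l 1) (axis k 1)))
           = (\<Sum>j\<in>UNIV. \<Sum>k\<in>UNIV. \<alpha> i j k * axis l 1 $ j * g $ k) + A2"
          unfolding A2_def K_def g_def by (simp add: distrib_left sum.distrib mult.assoc)
        also have "(\<Sum>j\<in>UNIV. \<Sum>k\<in>UNIV. \<alpha> i j k * axis l 1 $ j * g $ k) = A1"
        proof -
          have "(\<Sum>j\<in>UNIV. \<Sum>k\<in>UNIV. \<alpha> i j k * axis l 1 $ j * g $ k) = (\<Sum>j\<in>UNIV. if j = l then A1 else 0)"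
            unfolding A1_def by (intro sum.cong refl) (auto simp: ax)
          then show ?thesis by simp
        qed
        finally have KK: "K $ i $ l = A1 + A2 + (if i = l then \<phi> t else 0) + t $ i * g $ l"
          using pd unfolding K_def g_def ax by simp
        have LK: "(L ** K) $ i $ l = K $ i $ l - (Bm \<alpha> t ** K) $ i $ l"
          by (simp add: L_def mm_diff_r)
        have "(Bm \<alpha> t ** K) $ i $ l = (\<Sum>k\<in>UNIV. (\<Sum>s\<in>UNIV. t $ s * \<alpha> s i k) * K $ k $ l)"
          by (simp add: matrix_matrix_mult_def Bm_ent)
        also have "\<dots> = (\<Sum>k\<in>UNIV. \<Sum>s\<in>UNIV. t $ s * \<alpha> s i k * K $ k $ l)"
          by (simp add: sum_distrib_right)
        also have "\<dots> = (\<Sum>s\<in>UNIV. \<Sum>k\<in>UNIV. t $ s * \<alpha> s i k * K $ k $ l)"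
          by (rule sum.swap)
        also have "\<dots> = A2"
          unfolding A2_def by (intro sum.cong refl) (simp add: s1[of _ i])
        finally have BK: "(Bm \<alpha> t ** K) $ i $ l = A2" .
        have BG: "Bm \<alpha> g $ i $ l = A1"
          unfolding A1_def Bm_ent
        proof (intro sum.cong refl)
          fix s show "g $ s * \<alpha> s i l = \<alpha> i l s * g $ s"
            using s1[of s i l] s2[of i s l] by simp
        qed
        show ?thesis using KK LK BK BG by (simp add: outer_def mat_def)
      qed
      then show ?thesis by (simp add: vec_eq_iff)
    qed
    from alg[OF LN NL symL symB symK vec Keq]
    have c1: "Bm \<alpha> g ** L = L ** Bm \<alpha> g" and gw: "g = \<phi> t *\<^sub>R (N *v t)" by auto
    define w where "w = N *v t"
    have Bg: "Bm \<alpha> g = \<phi> t *\<^sub>R Bm \<alpha> w" using gw unfolding w_def by (simp add: Bm_scale)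
    have "Bm \<alpha> g ** Bm \<alpha> t = Bm \<alpha> t ** Bm \<alpha> g"
      using c1 unfolding L_def by (simp add: mm_diff_l mm_diff_r)
    then have "\<phi> t *\<^sub>R (Bm \<alpha> w ** Bm \<alpha> t) = \<phi> t *\<^sub>R (Bm \<alpha> t ** Bm \<alpha> w)"
      unfolding Bg by (simp add: matrix_scalar_ac scalar_matrix_assoc)
    then have "Bm \<alpha> w ** Bm \<alpha> t = Bm \<alpha> t ** Bm \<alpha> w" using phit by simp
    then show ?thesis
      using comm_ident[OF s1 s2, where p=p and q=q and t=t and w=w] unfolding w_def N_def L_def by simp
  qed
  ultimately show ?thesis unfolding Bm_def by blast
qed


end
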